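(* If $c\in SO(\mathbb{R}_+)$ and $\alpha\in SOS(\mathbb{R}_+)$, then $c\circ\alpha\in SO(\mathbb{R}_+)$, $c-c\circ\alpha\in C_b(\mathbb{R}_+)$, and $\lim_{t\to s}\big(c(t)-c(\alpha(t))\big)=0$ for $s\in\{0,\infty\}$.
   Context: $\mathbb{R}_+=(0,\infty)$. $C_b(\mathbb{R}_+)$: bounded continuous complex functions on $\mathbb{R}_+$. $SO(\mathbb{R}_+)$ is the set of $f\in C_b(\mathbb{R}_+)$ with $\lim_{r\to s}\sup\{|f(t)-f(\tau)|:t,\tau\in[\lambda r,r]\}=0$ for $s\in\{0,\infty\}$ and each (equivalently some) $\lambda\in(0,1)$. $SOS(\mathbb{R}_+)$ is the set of orientation-preserving diffeomorphisms $\alpha$ of $\mathbb{R}_+$ onto itself with no fixed points in $\mathbb{R}_+$ such that $\log\alpha'\in C_b(\mathbb{R}_+)$ and $\alpha'\in SO(\mathbb{R}_+)$. *)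

theory Defs
  imports "HOL-Analysis.Analysis"
begin

text \<open>Functions on the positive half-line R+ = (0,inf) are modelled as total functions
  real => complex; only their values on {0<..} matter.\<close>

definition Cb :: "(real \<Rightarrow> complex) \<Rightarrow> bool" where
  "Cb f \<longleftrightarrow> continuous_on {0<..} f \<and> bounded (f ` {0<..})"

definition osc :: "(real \<Rightarrow> complex) \<Rightarrow> real \<Rightarrow> real \<Rightarrow> real" where
  "osc f lam r = (SUP p\<in>{lam*r..r} \<times> {lam*r..r}. cmod (f (fst p) - f (snd p)))"

definition SO :: "(real \<Rightarrow> complex) \<Rightarrow> bool" where
  "SO f \<longleftrightarrow> Cb f \<and>
     (\<forall>lam. 0 < lam \<and> lam < 1 \<longrightarrow>
        ((\<lambda>r. osc f lam r) \<longlongrightarrow> 0) (at_right 0) \<and>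
        ((\<lambda>r. osc f lam r) \<longlongrightarrow> 0) at_top)"

definition SOS :: "(real \<Rightarrow> real) \<Rightarrow> bool" where
  "SOS \<alpha> \<longleftrightarrow>
     bij_betw \<alpha> {0<..} {0<..} \<and>
     strict_mono_on {0<..} \<alpha> \<and>
     (\<forall>t>0. \<alpha> differentiable (at t)) \<and>
     continuous_on {0<..} (deriv \<alpha>) \<and>
     (\<forall>t>0. inv_into {0<..} \<alpha> differentiable (at t)) \<and>
     (\<forall>t>0. \<alpha> t \<noteq> t) \<and>
     Cb (\<lambda>t. complex_of_real (ln (deriv \<alpha> t))) \<and>
     SO (\<lambda>t. complex_of_real (deriv \<alpha> t))"

end

theory Submission
  imports Defs
begin


lemma osc_le:
  assumes K: "\<forall>x>0. cmod (f x) \<le> K" and lr: "0 < lam*r"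
    and t: "t \<in> {lam*r..r}" and s: "s \<in> {lam*r..r}"
  shows "cmod (f t - f s) \<le> osc f lam r"
proof -
  let ?g = "\<lambda>p. cmod (f (fst p) - f (snd p))"
  let ?A = "{lam*r..r} \<times> {lam*r..r}"
  have m: "(t,s) \<in> ?A" using t s by simp
  have b: "bdd_above (?g ` ?A)"
  proof (rule bdd_aboveI2)
    fix p assume "p \<in> ?A"
    then have "fst p > 0" "snd p > 0" using lr by (auto simp: mem_Times_iff)
    then have "cmod (f (fst p)) \<le> K" "cmod (f (snd p)) \<le> K" using K by auto
    then show "?g p \<le> 2*K"
      using norm_triangle_ineq4[of "f (fst p)" "f (snd p)"] by linarith
  qed
  have "?g (t,s) \<le> Sup (?g ` ?A)" by (rule cSUP_upper[OF m b])
  then show ?thesis unfolding osc_def by simp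
qed

lemma osc_least:
  assumes "lam*r \<le> r" and "\<And>t s. t \<in> {lam*r..r} \<Longrightarrow> s \<in> {lam*r..r} \<Longrightarrow> cmod (f t - f s) \<le> e"
  shows "osc f lam r \<le> e"
  unfolding osc_def
proof (rule cSUP_least)
  show "{lam*r..r} \<times> {lam*r..r} \<noteq> {}" using assms(1) by simp
next
  fix p assume "p \<in> {lam*r..r} \<times> {lam*r..r}"
  then show "cmod (f (fst p) - f (snd p)) \<le> e" using assms(2) by (simp add: mem_Times_iff)
qed

lemma Cb_bound: assumes "Cb f" obtains K where "\<forall>x>0. cmod (f x) \<le> K"
proof -
  have "bounded (f ` {0<..})" using assms unfolding Cb_def by simp
  then obtain K where "\<forall>y\<in>f ` {0<..}. norm y \<le> K" unfolding bounded_iff by blast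
  then show ?thesis using that by force
qed

lemma SO_unif_gen:
  assumes K: "\<forall>x>0. cmod (c x) \<le> K"
    and lim: "((\<lambda>r. osc c (a/B) r) \<longlongrightarrow> 0) F"
    and fl: "filterlim (\<lambda>r. B*r) F F" and pos: "eventually (\<lambda>r. r > 0) F"
    and a: "0 < a" "a < B" and e: "e > 0"
  shows "eventually (\<lambda>r. \<forall>t\<in>{a*r..B*r}. \<forall>s\<in>{a*r..B*r}. cmod (c t - c s) < e) F"
proof -
  have "((\<lambda>r. osc c (a/B) (B*r)) \<longlongrightarrow> 0) F"
    using filterlim_compose[OF lim fl] by (simp add: o_def)
  then have ev: "eventually (\<lambda>r. dist (osc c (a/B) (B*r)) 0 < e) F"
    using e tendstoD by blast
  show ?thesis
    using ev pos
  proof eventually_elim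
    case (elim r)
    have eq: "a/B * (B*r) = a*r" using a by simp
    have pr: "0 < a/B * (B*r)" using eq a elim(2) by simp
    show ?case
    proof (intro ballI)
      fix t s assume t: "t \<in> {a*r..B*r}" and s: "s \<in> {a*r..B*r}"
      have "cmod (c t - c s) \<le> osc c (a/B) (B*r)"
        by (rule osc_le[OF K pr]) (use t s eq in simp_all)
      also have "\<dots> < e" using elim(1) by (simp add: dist_real_def) 
      finally show "cmod (c t - c s) < e" .
    qed
  qed
qed

lemma SO_unif:
  assumes "SO c" "0 < a" "a < B" "e > 0"
  shows "eventually (\<lambda>r. \<forall>t\<in>{a*r..B*r}. \<forall>s\<in>{a*r..B*r}. cmod (c t - c s) < e) (at_right 0)"
    and "eventually (\<lambda>r. \<forall>t\<in>{a*r..B*r}. \<forall>s\<in>{a*r..B*r}. cmod (c t - c s) < e) at_top"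
proof -
  have "Cb c" using assms(1) unfolding SO_def by simp
  then obtain K where K: "\<forall>x>0. cmod (c x) \<le> K" using Cb_bound by blast
  have lam: "0 < a/B" "a/B < 1" using assms by auto
  have l1: "((\<lambda>r. osc c (a/B) r) \<longlongrightarrow> 0) (at_right 0)" "((\<lambda>r. osc c (a/B) r) \<longlongrightarrow> 0) at_top"
    using assms(1) lam unfolding SO_def by blast+
  have B: "B > 0" using assms by simp
  have f1: "filterlim (\<lambda>r. B*r) (at_right 0) (at_right 0)"
  proof -
    have "((\<lambda>r. B*r) \<longlongrightarrow> B*0) (at_right (0::real))"
      by (intro tendsto_intros)
    moreover have "eventually (\<lambda>r. B*r \<in> {0<..} \<and> B*r \<noteq> 0) (at_right (0::real))"
      using eventually_at_right_less[of "0::real"] by eventually_elim (use B in simp)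
    ultimately show ?thesis unfolding filterlim_at by simp
  qed
  have f2: "filterlim (\<lambda>r. B*r) at_top at_top"
    using filterlim_tendsto_pos_mult_at_top[OF tendsto_const B filterlim_ident] by simp
  show "eventually (\<lambda>r. \<forall>t\<in>{a*r..B*r}. \<forall>s\<in>{a*r..B*r}. cmod (c t - c s) < e) (at_right 0)"
    by (rule SO_unif_gen[OF K l1(1) f1 _ assms(2,3,4)]) (rule eventually_at_right_less)
  show "eventually (\<lambda>r. \<forall>t\<in>{a*r..B*r}. \<forall>s\<in>{a*r..B*r}. cmod (c t - c s) < e) at_top"
    by (rule SO_unif_gen[OF K l1(2) f2 _ assms(2,3,4)]) (simp add: eventually_gt_at_top)
qed



lemma SOS_facts:
  assumes "SOS \<alpha>"
  obtains m M where "0 < m" "m \<le> M" "\<forall>t>0. m*t \<le> \<alpha> t \<and> \<alpha> t \<le> M*t"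
    "continuous_on {0<..} \<alpha>" "\<forall>t>0. \<alpha> t > 0"
proof -
  have bij: "bij_betw \<alpha> {0<..} {0<..}" and sm: "strict_mono_on {0<..} \<alpha>"
    and dif: "\<forall>t>0. \<alpha> differentiable (at t)"
    and idif: "\<forall>t>0. inv_into {0<..} \<alpha> differentiable (at t)"
    and Cl: "Cb (\<lambda>t. complex_of_real (ln (deriv \<alpha> t)))"
    using assms unfolding SOS_def by blast+
  have der: "DERIV \<alpha> t :> deriv \<alpha> t" if "t > 0" for t
    using dif that DERIV_deriv_iff_real_differentiable by blast
  have apos: "\<alpha> t > 0" if "t > 0" for t
    using bij that unfolding bij_betw_def by auto
  have cont: "continuous_on {0<..} \<alpha>"
    by (intro continuous_at_imp_continuous_on ballI differentiable_imp_continuous_within) (use dif in simp)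
  have dnn: "deriv \<alpha> t \<ge> 0" if t: "t > 0" for t
  proof (rule ccontr)
    assume "\<not> deriv \<alpha> t \<ge> 0"
    then obtain d where d: "d > 0" "\<forall>h>0. h < d \<longrightarrow> \<alpha> t > \<alpha> (t + h)"
      using DERIV_neg_dec_right[OF der[OF t]] by force
    have "\<alpha> t < \<alpha> (t + d/2)" using sm t d(1) unfolding strict_mono_on_def by simp
    moreover have "\<alpha> t > \<alpha> (t + d/2)" using d by simp
    ultimately show False by simp
  qed
  have dnz: "deriv \<alpha> t \<noteq> 0" if t: "t > 0" for t
  proof -
    let ?g = "inv_into {0<..} \<alpha>"
    have "?g differentiable (at (\<alpha> t))" using idif apos[OF t] by simp
    then have dg: "DERIV ?g (\<alpha> t) :> deriv ?g (\<alpha> t)"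
      using DERIV_deriv_iff_real_differentiable by blast
    have c1: "DERIV (?g \<circ> \<alpha>) t :> deriv ?g (\<alpha> t) * deriv \<alpha> t"
      by (rule DERIV_chain[OF dg der[OF t]])
    have "DERIV (\<lambda>x. x) t :> 1" by simp
    then have c2: "DERIV (?g \<circ> \<alpha>) t :> 1"
    proof (rule has_field_derivative_transform_within_open[of _ _ _ "{0<..}"])
      show "open {0::real<..}" by simp
      show "t \<in> {0<..}" using t by simp
      fix x :: real assume "x \<in> {0<..}"
      then show "x = (?g \<circ> \<alpha>) x" using bij_betw_inv_into_left[OF bij] by simp
    qed
    have "deriv ?g (\<alpha> t) * deriv \<alpha> t = 1" using DERIV_unique[OF c1 c2] .
    then show ?thesis by auto
  qed
  have dpos: "deriv \<alpha> t > 0" if "t > 0" for t using dnn[OF that] dnz[OF that] by simp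
  obtain L where L: "\<forall>x>0. cmod (complex_of_real (ln (deriv \<alpha> x))) \<le> L"
    using Cb_bound[OF Cl] by blast
  have dbd: "exp (-L) \<le> deriv \<alpha> t \<and> deriv \<alpha> t \<le> exp L" if t: "t > 0" for t
  proof -
    have "\<bar>ln (deriv \<alpha> t)\<bar> \<le> L" using L t by simp
    then have "-L \<le> ln (deriv \<alpha> t)" "ln (deriv \<alpha> t) \<le> L" by auto
    then have "exp (-L) \<le> exp (ln (deriv \<alpha> t))" "exp (ln (deriv \<alpha> t)) \<le> exp L" by simp_all
    then show ?thesis using dpos[OF t] by simp
  qed
  define m where "m = exp (-L)"
  define M where "M = exp L"
  have m0: "0 < m" unfolding m_def by simp
  have mM: "m \<le> M" using dbd[of 1] unfolding m_def M_def by linarith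
  have mvt: "m*(t-s) \<le> \<alpha> t - \<alpha> s \<and> \<alpha> t - \<alpha> s \<le> M*(t-s)" if s: "0 < s" "s < t" for s t
  proof -
    obtain z where z: "s < z" "z < t" "\<alpha> t - \<alpha> s = (t - s) * deriv \<alpha> z"
      using MVT2[of s t \<alpha> "deriv \<alpha>"] der s by force
    have "m \<le> deriv \<alpha> z" "deriv \<alpha> z \<le> M" using dbd[of z] z s unfolding m_def M_def by auto
    then show ?thesis using z s by (simp add: mult_right_mono mult.commute)
  qed
  have bounds: "m*t \<le> \<alpha> t \<and> \<alpha> t \<le> M*t" if t: "t > 0" for t
  proof
    show "m*t \<le> \<alpha> t"
    proof (rule field_le_epsilon)
      fix e :: real assume e: "e > 0"
      define s where "s = min (t/2) (e/m)"
      have s: "0 < s" "s < t" "m * s \<le> e" using t e m0 unfolding s_def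
        by (auto simp: min_def field_simps)
      have "m*(t-s) \<le> \<alpha> t - \<alpha> s" using mvt[OF s(1,2)] by simp
      then show "m*t \<le> \<alpha> t + e" using apos[OF s(1)] s(3) by (simp add: algebra_simps)
    qed
    show "\<alpha> t \<le> M*t"
    proof (rule field_le_epsilon)
      fix e :: real assume e: "e > 0"
      define d where "d = min e (\<alpha> t / 2)"
      have d: "0 < d" "d \<le> e" "d < \<alpha> t" using e apos[OF t] unfolding d_def by auto
      have "d \<in> \<alpha> ` {0<..}" using bij d(1) unfolding bij_betw_def by simp
      then obtain s where s: "s > 0" "\<alpha> s = d" by force
      have st: "s < t"
      proof (rule ccontr)
        assume "\<not> s < t"
        then have "t \<le> s" by simp
        then have "\<alpha> t \<le> \<alpha> s" using sm t s(1) unfolding strict_mono_on_def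
          by (cases "t = s") (auto, meson less_eq_real_def order.strict_trans1)
        then show False using d s by simp
      qed
      have "\<alpha> t - \<alpha> s \<le> M*(t-s)" using mvt[OF s(1) st] by simp
      moreover have "M*(t-s) \<le> M*t" using s(1) m0 mM by simp
      ultimately show "\<alpha> t \<le> M*t + e" using s d by simp
    qed
  qed
  show ?thesis using that[OF m0 mM _ cont] bounds apos by blast
qed



lemma osc_tendsto_gen:
  assumes K: "\<forall>x>0. cmod (f x) \<le> K" and lam: "0 < lam" "lam < 1"
    and ev: "\<And>e. e > 0 \<Longrightarrow> eventually (\<lambda>r. \<forall>t\<in>{lam*r..r}. \<forall>s\<in>{lam*r..r}. cmod (f t - f s) < e) F"
    and pos: "eventually (\<lambda>r. r > 0) F"
  shows "((\<lambda>r. osc f lam r) \<longlongrightarrow> 0) F"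
proof (rule tendstoI)
  fix e :: real assume e: "e > 0"
  have e2: "e/2 > 0" using e by simp
  show "eventually (\<lambda>r. dist (osc f lam r) 0 < e) F"
    using ev[OF e2] pos
  proof eventually_elim
    case (elim r)
    have lr: "0 < lam * r" "lam * r \<le> r" using elim(2) lam by auto
    have "0 \<le> cmod (f r - f r)" by simp
    also have "\<dots> \<le> osc f lam r" by (rule osc_le[OF K lr(1)]) (use lr in auto)
    finally have n: "0 \<le> osc f lam r" .
    have "osc f lam r \<le> e/2"
      by (rule osc_least[OF lr(2)]) (use elim(1) in force)
    then show ?case using n e by (simp add: dist_real_def)
  qed
qed

theorem lemma2p3:
  fixes c :: "real \<Rightarrow> complex" and \<alpha> :: "real \<Rightarrow> real"
  assumes "SO c" and "SOS \<alpha>"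
  shows "SO (c \<circ> \<alpha>) \<and>
         Cb (\<lambda>t. c t - c (\<alpha> t)) \<and>
         ((\<lambda>t. c t - c (\<alpha> t)) \<longlongrightarrow> 0) (at_right 0) \<and>
         ((\<lambda>t. c t - c (\<alpha> t)) \<longlongrightarrow> 0) at_top"
proof -
  obtain m M where m0: "0 < m" and mM: "m \<le> M" and bds: "\<forall>t>0. m*t \<le> \<alpha> t \<and> \<alpha> t \<le> M*t"
    and ca: "continuous_on {0<..} \<alpha>" and apos: "\<forall>t>0. \<alpha> t > 0"
    using SOS_facts[OF assms(2)] by blast
  have Cbc: "Cb c" using assms(1) unfolding SO_def by simp
  then obtain K where K: "\<forall>x>0. cmod (c x) \<le> K" using Cb_bound by blast
  have cc: "continuous_on {0<..} c" using Cbc unfolding Cb_def by simp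
  have im: "\<alpha> ` {0<..} \<subseteq> {0<..}" using apos by auto
  have cca: "continuous_on {0<..} (c \<circ> \<alpha>)"
    by (rule continuous_on_compose[OF ca continuous_on_subset[OF cc im]])
  have Ka: "\<forall>x>0. cmod ((c \<circ> \<alpha>) x) \<le> K" using K apos by simp
  have Cba: "Cb (c \<circ> \<alpha>)" unfolding Cb_def
  proof
    show "continuous_on {0<..} (c \<circ> \<alpha>)" by (rule cca)
    show "bounded ((c \<circ> \<alpha>) ` {0<..})" unfolding bounded_iff using Ka by force
  qed
  have SOa: "SO (c \<circ> \<alpha>)" unfolding SO_def
  proof (intro conjI allI impI Cba)
    fix lam :: real assume lam: "0 < lam \<and> lam < 1"
    have a1: "0 < m*lam" using lam m0 by simp
    have "m*lam < m*1" using lam m0 by (intro mult_strict_left_mono) auto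
    then have a2: "m*lam < M" using mM by simp
    note a = a1 a2
    have key: "\<forall>t\<in>{lam*r..r}. \<forall>s\<in>{lam*r..r}. cmod ((c \<circ> \<alpha>) t - (c \<circ> \<alpha>) s) < e"
      if r: "r > 0" and h: "\<forall>t\<in>{m*lam*r..M*r}. \<forall>s\<in>{m*lam*r..M*r}. cmod (c t - c s) < e" for r e
    proof (intro ballI)
      have inI: "\<alpha> t \<in> {m*lam*r..M*r}" if t: "t \<in> {lam*r..r}" for t
      proof -
        have tp: "t > 0" using t r lam by (auto intro: less_le_trans[of 0 "lam*r"])
        have "m*(lam*r) \<le> m*t" using t m0 by (intro mult_left_mono) auto
        moreover have "M*t \<le> M*r" using t m0 mM by (intro mult_left_mono) auto
        ultimately show ?thesis using bds tp by (auto simp: mult.assoc)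
      qed
      fix t s assume "t \<in> {lam*r..r}" "s \<in> {lam*r..r}"
      then show "cmod ((c \<circ> \<alpha>) t - (c \<circ> \<alpha>) s) < e" using h inI by simp
    qed
    show "((\<lambda>r. osc (c \<circ> \<alpha>) lam r) \<longlongrightarrow> 0) (at_right 0)"
    proof (rule osc_tendsto_gen[OF Ka])
      fix e :: real assume e: "e > 0"
      show "eventually (\<lambda>r. \<forall>t\<in>{lam*r..r}. \<forall>s\<in>{lam*r..r}. cmod ((c \<circ> \<alpha>) t - (c \<circ> \<alpha>) s) < e) (at_right 0)"
        using SO_unif(1)[OF assms(1) a e] eventually_at_right_less[of "0::real"]
        by eventually_elim (rule key)
    next
      show "0 < lam" "lam < 1" using lam by simp_all
      show "eventually (\<lambda>r. r > 0) (at_right (0::real))" by (rule eventually_at_right_less)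
    qed
    show "((\<lambda>r. osc (c \<circ> \<alpha>) lam r) \<longlongrightarrow> 0) at_top"
    proof (rule osc_tendsto_gen[OF Ka])
      fix e :: real assume e: "e > 0"
      show "eventually (\<lambda>r. \<forall>t\<in>{lam*r..r}. \<forall>s\<in>{lam*r..r}. cmod ((c \<circ> \<alpha>) t - (c \<circ> \<alpha>) s) < e) at_top"
        using SO_unif(2)[OF assms(1) a e] eventually_gt_at_top[of "0::real"]
        by eventually_elim (rule key)
    next
      show "0 < lam" "lam < 1" using lam by simp_all
      show "eventually (\<lambda>r. r > 0) (at_top::real filter)" by (rule eventually_gt_at_top)
    qed
  qed
  have Cbd: "Cb (\<lambda>t. c t - c (\<alpha> t))" unfolding Cb_def
  proof
    show "continuous_on {0<..} (\<lambda>t. c t - c (\<alpha> t))"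
      using continuous_on_diff[OF cc cca] by (simp add: o_def)
    have "\<forall>x>0. cmod (c x - c (\<alpha> x)) \<le> 2*K"
    proof (intro allI impI)
      fix x :: real assume "x > 0"
      then have "cmod (c x) \<le> K" "cmod (c (\<alpha> x)) \<le> K" using K apos by auto
      then show "cmod (c x - c (\<alpha> x)) \<le> 2*K"
        using norm_triangle_ineq4[of "c x" "c (\<alpha> x)"] by linarith
    qed
    then show "bounded ((\<lambda>t. c t - c (\<alpha> t)) ` {0<..})" unfolding bounded_iff by force
  qed
  define a where "a = min 1 m / 2"
  define B where "B = max 1 M"
  have aB: "0 < a" "a < B" using m0 unfolding a_def B_def by auto
  have inab: "t \<in> {a*t..B*t} \<and> \<alpha> t \<in> {a*t..B*t}" if t: "t > 0" for t
  proof -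
    have "a \<le> 1" "a \<le> m" "1 \<le> B" "M \<le> B" using m0 unfolding a_def B_def by auto
    then have "a*t \<le> t" "a*t \<le> m*t" "t \<le> B*t" "M*t \<le> B*t" using t
      by (auto intro: mult_right_mono)
    moreover have "m*t \<le> \<alpha> t" "\<alpha> t \<le> M*t" using bds t by auto
    ultimately show ?thesis by auto
  qed
  have lim: "((\<lambda>t. c t - c (\<alpha> t)) \<longlongrightarrow> 0) F"
    if ev: "\<And>e. e > 0 \<Longrightarrow> eventually (\<lambda>r. \<forall>t\<in>{a*r..B*r}. \<forall>s\<in>{a*r..B*r}. cmod (c t - c s) < e) F"
      and pos: "eventually (\<lambda>r. r > 0) F" for F
  proof (rule tendstoI)
    fix e :: real assume e: "e > 0"
    show "eventually (\<lambda>t. dist (c t - c (\<alpha> t)) 0 < e) F"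
      using ev[OF e] pos
    proof eventually_elim
      case (elim t)
      then show ?case using inab[OF elim(2)] by simp
    qed
  qed
  have l1: "((\<lambda>t. c t - c (\<alpha> t)) \<longlongrightarrow> 0) (at_right 0)"
    by (rule lim[OF SO_unif(1)[OF assms(1) aB] eventually_at_right_less])
  have l2: "((\<lambda>t. c t - c (\<alpha> t)) \<longlongrightarrow> 0) at_top"
    by (rule lim[OF SO_unif(2)[OF assms(1) aB] eventually_gt_at_top])
  show ?thesis using SOa Cbd l1 l2 by blast
qed


end
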